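(* Let $(u_S,u_R)$ be a transparent environment satisfying no-duplicate-actions. If commitment has no value, then there exists a simple babbling cheap-talk equilibrium $(\sigma,\rho)$ with $U_S(\sigma,\rho)$ equal to the persuasion payoff.
   Context: $A$ and $\Omega$ are finite nonempty sets, $\mu_0$ a prior on $\Omega$ with $\mu_0(\omega)>0$ for all $\omega$, $M$ a finite message set with $|M|>\max\{|\Omega|,|A|\}$. An environment is a pair of functions $u_S,u_R:A\times\Omega\to[0,1]$. It is transparent if there is $v:A\to\mathbb R$ with $u_S(a,\omega)=v(a)$ for all $a,\omega$; it satisfies no-duplicate-actions if $v(a)\ne v(a')$ for all $a\ne a'$. Messaging strategies $\sigma:\Omega\to\Delta M$, action strategies $\rho:M\to\Delta A$, $U_i(\sigma,\rho)=\sum_{\omega,m,a}\mu_0(\omega)\sigma(m|\omega)\rho(a|m)u_i(a,\omega)$. $(\sigma,\rho)$ is S-BR if $\sigma\in\arg\max_{\sigma'}U_S(\sigma',\rho)$ and R-BR if $\rho\in\arg\max_{\rho'}U_R(\sigma,\rho')$; a cheap-talk equilibrium is both. Persuasion payoff: max of $U_S$ over R-BR profiles; cheap-talk payoff: max over cheap-talk equilibria; commitment has no value if they are equal. $M_\sigma=\{m:\sigma(m|\omega)>0\text{ for some }\omega\}$. A simple babbling cheap-talk equilibrium is a cheap-talk equilibrium $(\sigma,\rho)$ with $|M_\sigma|=1$ and some $a_0\in A$ such that $\rho(a_0|m)=1$ for all $m\in M$. *)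

theory Defs
  imports Complex_Main "HOL-Library.Cardinality"
begin

definition is_dist :: "('x::finite \<Rightarrow> real) \<Rightarrow> bool" where
  "is_dist p \<longleftrightarrow> (\<forall>x. 0 \<le> p x) \<and> sum p UNIV = 1"

definition msg_strat :: "('w::finite \<Rightarrow> 'm::finite \<Rightarrow> real) \<Rightarrow> bool" where
  "msg_strat \<sigma> \<longleftrightarrow> (\<forall>w. is_dist (\<sigma> w))"

definition act_strat :: "('m::finite \<Rightarrow> 'a::finite \<Rightarrow> real) \<Rightarrow> bool" where
  "act_strat \<rho> \<longleftrightarrow> (\<forall>m. is_dist (\<rho> m))"

definition payoff ::
  "('w::finite \<Rightarrow> real) \<Rightarrow> ('a::finite \<Rightarrow> 'w \<Rightarrow> real) \<Rightarrow> ('w \<Rightarrow> 'm::finite \<Rightarrow> real)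
     \<Rightarrow> ('m \<Rightarrow> 'a \<Rightarrow> real) \<Rightarrow> real" where
  "payoff \<mu> u \<sigma> \<rho> = (\<Sum>w\<in>UNIV. \<Sum>m\<in>UNIV. \<Sum>a\<in>UNIV. \<mu> w * \<sigma> w m * \<rho> m a * u a w)"

definition S_BR ::
  "('w::finite \<Rightarrow> real) \<Rightarrow> ('a::finite \<Rightarrow> 'w \<Rightarrow> real) \<Rightarrow> ('w \<Rightarrow> 'm::finite \<Rightarrow> real)
     \<Rightarrow> ('m \<Rightarrow> 'a \<Rightarrow> real) \<Rightarrow> bool" where
  "S_BR \<mu> uS \<sigma> \<rho> \<longleftrightarrow> msg_strat \<sigma> \<and> act_strat \<rho> \<and>
     (\<forall>\<sigma>'. msg_strat \<sigma>' \<longrightarrow> payoff \<mu> uS \<sigma>' \<rho> \<le> payoff \<mu> uS \<sigma> \<rho>)"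

definition R_BR ::
  "('w::finite \<Rightarrow> real) \<Rightarrow> ('a::finite \<Rightarrow> 'w \<Rightarrow> real) \<Rightarrow> ('w \<Rightarrow> 'm::finite \<Rightarrow> real)
     \<Rightarrow> ('m \<Rightarrow> 'a \<Rightarrow> real) \<Rightarrow> bool" where
  "R_BR \<mu> uR \<sigma> \<rho> \<longleftrightarrow> msg_strat \<sigma> \<and> act_strat \<rho> \<and>
     (\<forall>\<rho>'. act_strat \<rho>' \<longrightarrow> payoff \<mu> uR \<sigma> \<rho>' \<le> payoff \<mu> uR \<sigma> \<rho>)"

definition cheap_talk_eq ::
  "('w::finite \<Rightarrow> real) \<Rightarrow> ('a::finite \<Rightarrow> 'w \<Rightarrow> real) \<Rightarrow> ('a \<Rightarrow> 'w \<Rightarrow> real)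
     \<Rightarrow> ('w \<Rightarrow> 'm::finite \<Rightarrow> real) \<Rightarrow> ('m \<Rightarrow> 'a \<Rightarrow> real) \<Rightarrow> bool" where
  "cheap_talk_eq \<mu> uS uR \<sigma> \<rho> \<longleftrightarrow> S_BR \<mu> uS \<sigma> \<rho> \<and> R_BR \<mu> uR \<sigma> \<rho>"

text \<open>Persuasion payoff: the maximum (here written as the supremum, which is attained)
  of U_S over R-BR profiles; the message type is passed via a type annotation.\<close>

definition persuasion_payoff ::
  "('w::finite \<Rightarrow> real) \<Rightarrow> ('a::finite \<Rightarrow> 'w \<Rightarrow> real) \<Rightarrow> ('a \<Rightarrow> 'w \<Rightarrow> real)
     \<Rightarrow> 'm::finite itself \<Rightarrow> real" where
  "persuasion_payoff \<mu> uS uR (_::'m itself) =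
     Sup {payoff \<mu> uS \<sigma> \<rho> | (\<sigma>::'w \<Rightarrow> 'm \<Rightarrow> real) \<rho>. R_BR \<mu> uR \<sigma> \<rho>}"

definition cheap_talk_payoff ::
  "('w::finite \<Rightarrow> real) \<Rightarrow> ('a::finite \<Rightarrow> 'w \<Rightarrow> real) \<Rightarrow> ('a \<Rightarrow> 'w \<Rightarrow> real)
     \<Rightarrow> 'm::finite itself \<Rightarrow> real" where
  "cheap_talk_payoff \<mu> uS uR (_::'m itself) =
     Sup {payoff \<mu> uS \<sigma> \<rho> | (\<sigma>::'w \<Rightarrow> 'm \<Rightarrow> real) \<rho>. cheap_talk_eq \<mu> uS uR \<sigma> \<rho>}"

definition commitment_no_value ::
  "('w::finite \<Rightarrow> real) \<Rightarrow> ('a::finite \<Rightarrow> 'w \<Rightarrow> real) \<Rightarrow> ('a \<Rightarrow> 'w \<Rightarrow> real)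
     \<Rightarrow> 'm::finite itself \<Rightarrow> bool" where
  "commitment_no_value \<mu> uS uR M \<longleftrightarrow>
     persuasion_payoff \<mu> uS uR M = cheap_talk_payoff \<mu> uS uR M"

definition msgs_used :: "('w \<Rightarrow> 'm \<Rightarrow> real) \<Rightarrow> 'm set" where
  "msgs_used \<sigma> = {m. \<exists>w. \<sigma> w m > 0}"

definition simple_babbling_eq ::
  "('w::finite \<Rightarrow> real) \<Rightarrow> ('a::finite \<Rightarrow> 'w \<Rightarrow> real) \<Rightarrow> ('a \<Rightarrow> 'w \<Rightarrow> real)
     \<Rightarrow> ('w \<Rightarrow> 'm::finite \<Rightarrow> real) \<Rightarrow> ('m \<Rightarrow> 'a \<Rightarrow> real) \<Rightarrow> bool" where
  "simple_babbling_eq \<mu> uS uR \<sigma> \<rho> \<longleftrightarrow> cheap_talk_eq \<mu> uS uR \<sigma> \<rho> \<and>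
     card (msgs_used \<sigma>) = 1 \<and> (\<exists>a0. \<forall>m. \<rho> m a0 = 1)"

definition environment :: "('a \<Rightarrow> 'w \<Rightarrow> real) \<Rightarrow> ('a \<Rightarrow> 'w \<Rightarrow> real) \<Rightarrow> bool" where
  "environment uS uR \<longleftrightarrow> (\<forall>a w. 0 \<le> uS a w \<and> uS a w \<le> 1 \<and> 0 \<le> uR a w \<and> uR a w \<le> 1)"

definition transparent :: "('a \<Rightarrow> 'w \<Rightarrow> real) \<Rightarrow> bool" where
  "transparent uS \<longleftrightarrow> (\<exists>v. \<forall>a w. uS a w = v a)"

definition transparent_no_dup :: "('a \<Rightarrow> 'w \<Rightarrow> real) \<Rightarrow> bool" where
  "transparent_no_dup uS \<longleftrightarrow> (\<exists>v. (\<forall>a w. uS a w = v a) \<and> (\<forall>a a'. a \<noteq> a' \<longrightarrow> v a \<noteq> v a'))"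

end

theory Submission
  imports Defs
begin

lemma sig_sum: "msg_strat \<sigma> \<Longrightarrow> (\<Sum>m\<in>UNIV. \<sigma> w m) = 1"
  by (simp add: msg_strat_def is_dist_def)
lemma sig_nn: "msg_strat \<sigma> \<Longrightarrow> 0 \<le> \<sigma> w m"
  by (simp add: msg_strat_def is_dist_def)
lemma rho_sum: "act_strat \<rho> \<Longrightarrow> (\<Sum>a\<in>UNIV. \<rho> m a) = 1"
  by (simp add: act_strat_def is_dist_def)
lemma rho_nn: "act_strat \<rho> \<Longrightarrow> 0 \<le> \<rho> m a"
  by (simp add: act_strat_def is_dist_def)

lemma payoff_G: "payoff \<mu> u \<sigma> \<rho> = (\<Sum>m\<in>UNIV. \<Sum>a\<in>UNIV. \<rho> m a * (\<Sum>w\<in>UNIV. \<mu> w * \<sigma> w m * u a w))"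
proof -
  have "payoff \<mu> u \<sigma> \<rho> = (\<Sum>m\<in>UNIV. \<Sum>w\<in>UNIV. \<Sum>a\<in>UNIV. \<mu> w * \<sigma> w m * \<rho> m a * u a w)"
    unfolding payoff_def by (rule sum.swap)
  also have "\<dots> = (\<Sum>m\<in>UNIV. \<Sum>a\<in>UNIV. \<Sum>w\<in>UNIV. \<mu> w * \<sigma> w m * \<rho> m a * u a w)"
    by (rule sum.cong[OF refl], rule sum.swap)
  also have "\<dots> = (\<Sum>m\<in>UNIV. \<Sum>a\<in>UNIV. \<rho> m a * (\<Sum>w\<in>UNIV. \<mu> w * \<sigma> w m * u a w))"
    by (simp add: sum_distrib_left mult_ac)
  finally show ?thesis .
qed

lemma payoff_T: "(\<forall>a w. u a w = v a) \<Longrightarrow> payoff \<mu> u \<sigma> \<rho> = (\<Sum>w\<in>UNIV. \<mu> w * (\<Sum>m\<in>UNIV. \<sigma> w m * (\<Sum>a\<in>UNIV. \<rho> m a * v a)))"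
  unfolding payoff_def by (simp add: sum_distrib_left mult_ac)

lemma payoff_le:
  assumes "msg_strat \<sigma>" "act_strat \<rho>" "\<forall>w. 0 \<le> \<mu> w" "\<forall>a w. u a w \<le> 1"
  shows "payoff \<mu> u \<sigma> \<rho> \<le> sum \<mu> UNIV"
proof -
  have "payoff \<mu> u \<sigma> \<rho> \<le> (\<Sum>w\<in>UNIV. \<Sum>m\<in>UNIV. \<Sum>a\<in>UNIV. \<mu> w * \<sigma> w m * \<rho> m a)"
    unfolding payoff_def
    apply (intro sum_mono)
    apply (rule mult_left_le)
    using assms sig_nn rho_nn by (auto intro!: mult_nonneg_nonneg)
  also have "\<dots> = sum \<mu> UNIV"
    using assms by (simp add: sum_distrib_left[symmetric] sig_sum rho_sum)
  finally show ?thesis .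
qed

lemma payoff_d_sigma: "payoff \<mu> u (\<lambda>w m. if m = m0 then 1 else 0) \<rho> = (\<Sum>a\<in>UNIV. \<rho> m0 a * (\<Sum>w\<in>UNIV. \<mu> w * u a w))"
proof -
  have "\<And>m. (\<Sum>a\<in>UNIV. \<rho> m a * (\<Sum>w\<in>UNIV. \<mu> w * (if m = m0 then 1 else 0) * u a w))
     = (if m = m0 then (\<Sum>a\<in>UNIV. \<rho> m0 a * (\<Sum>w\<in>UNIV. \<mu> w * u a w)) else 0)"
    by auto
  then show ?thesis unfolding payoff_G by simp
qed

lemma sum_delta_mult: "(\<Sum>x\<in>UNIV. (if x = a then c else 0) * f x) = c * (f (a::'x::finite) :: real)"
proof -
  have "(\<Sum>x\<in>UNIV. (if x = a then c else 0) * f x) = (\<Sum>x\<in>UNIV. if x = a then c * f x else 0)"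
    by (rule sum.cong) auto
  also have "\<dots> = c * f a" by (rule trans[OF sum.delta]) simp_all
  finally show ?thesis .
qed

lemma dist_d: "is_dist (\<lambda>x. if x = a then 1 else (0::real))"
  unfolding is_dist_def by simp


lemma babble:
  fixes \<mu> :: "'w::finite \<Rightarrow> real" and uS uR :: "'a::finite \<Rightarrow> 'w \<Rightarrow> real"
  assumes mu: "\<forall>w. 0 \<le> \<mu> w" and T: "\<forall>a w. uS a w = v a"
    and best: "\<forall>a. (\<Sum>w\<in>UNIV. \<mu> w * uR a w) \<le> (\<Sum>w\<in>UNIV. \<mu> w * uR aa w)"
  shows "simple_babbling_eq \<mu> uS uR (\<lambda>w m. if m = (mm::'m::finite) then 1 else 0) (\<lambda>m a. if a = aa then 1 else 0)
     \<and> payoff \<mu> uS (\<lambda>w m. if m = mm then 1 else 0) (\<lambda>m a. if a = aa then 1 else 0) = v aa * sum \<mu> UNIV"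
proof -
  define \<sigma> :: "'w \<Rightarrow> 'm \<Rightarrow> real" where "\<sigma> = (\<lambda>w m. if m = mm then 1 else 0)"
  define \<rho> :: "'m \<Rightarrow> 'a \<Rightarrow> real" where "\<rho> = (\<lambda>m a. if a = aa then 1 else 0)"
  have ms: "msg_strat \<sigma>" unfolding msg_strat_def \<sigma>_def using dist_d by auto
  have as: "act_strat \<rho>" unfolding act_strat_def \<rho>_def using dist_d by auto
  have pS: "payoff \<mu> uS \<sigma>' \<rho> = v aa * sum \<mu> UNIV" if "msg_strat \<sigma>'" for \<sigma>' :: "'w \<Rightarrow> 'm \<Rightarrow> real"
  proof -
    have "payoff \<mu> uS \<sigma>' \<rho> = (\<Sum>w\<in>UNIV. \<mu> w * (\<Sum>m\<in>UNIV. \<sigma>' w m * v aa))"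
      unfolding payoff_T[OF T] \<rho>_def by (simp add: sum_delta_mult)
    also have "\<dots> = (\<Sum>w\<in>UNIV. \<mu> w * v aa)"
      by (simp add: sum_distrib_right[symmetric] sig_sum[OF that])
    finally show ?thesis by (simp add: sum_distrib_right[symmetric] mult.commute)
  qed
  have sbr: "S_BR \<mu> uS \<sigma> \<rho>" unfolding S_BR_def using ms as pS by simp
  define R where "R a = (\<Sum>w\<in>UNIV. \<mu> w * uR a w)" for a
  have rbr: "R_BR \<mu> uR \<sigma> \<rho>"
    unfolding R_BR_def
  proof (intro conjI ms as allI impI)
    fix \<rho>' :: "'m \<Rightarrow> 'a \<Rightarrow> real" assume a: "act_strat \<rho>'"
    have "payoff \<mu> uR \<sigma> \<rho>' = (\<Sum>a\<in>UNIV. \<rho>' mm a * R a)"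
      unfolding \<sigma>_def payoff_d_sigma R_def ..
    also have "\<dots> \<le> (\<Sum>a\<in>UNIV. \<rho>' mm a * R aa)"
      apply (intro sum_mono mult_left_mono)
      using best rho_nn[OF a] unfolding R_def by auto
    also have "\<dots> = R aa" using rho_sum[OF a] by (simp add: sum_distrib_right[symmetric])
    also have "\<dots> = payoff \<mu> uR \<sigma> \<rho>"
      unfolding \<sigma>_def payoff_d_sigma R_def \<rho>_def by (simp add: sum_delta_mult)
    finally show "payoff \<mu> uR \<sigma> \<rho>' \<le> payoff \<mu> uR \<sigma> \<rho>" .
  qed
  have mu1: "msgs_used \<sigma> = {mm}" unfolding msgs_used_def \<sigma>_def by auto
  show ?thesis
    using sbr rbr mu1 pS[OF ms] unfolding simple_babbling_eq_def cheap_talk_eq_def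
    by (auto simp: \<sigma>_def \<rho>_def)
qed

lemma BR_supp:
  fixes \<mu> :: "'w::finite \<Rightarrow> real" and u :: "'a::finite \<Rightarrow> 'w \<Rightarrow> real" and \<sigma> :: "'w \<Rightarrow> 'm::finite \<Rightarrow> real"
  assumes br: "R_BR \<mu> u \<sigma> \<rho>" and pos: "\<rho> m a > 0"
  shows "(\<Sum>w\<in>UNIV. \<mu> w * \<sigma> w m * u a' w) \<le> (\<Sum>w\<in>UNIV. \<mu> w * \<sigma> w m * u a w)"
proof (cases "a = a'")
  case True then show ?thesis by simp
next
  case False
  define G where "G x = (\<Sum>w\<in>UNIV. \<mu> w * \<sigma> w m * u x w)" for x
  define r where "r x = \<rho> m x + (if x = a' then \<rho> m a else 0) - (if x = a then \<rho> m a else 0)" for x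
  define \<rho>' where "\<rho>' = \<rho>(m := r)"
  have as: "act_strat \<rho>" using br R_BR_def by blast
  have rd: "is_dist r"
    unfolding is_dist_def
  proof
    show "\<forall>x. 0 \<le> r x" using rho_nn[OF as, of m] pos False unfolding r_def
      by (auto intro: add_nonneg_nonneg)
    show "sum r UNIV = 1" unfolding r_def
      using rho_sum[OF as, of m] by (simp add: sum.distrib sum_subtractf)
  qed
  have as': "act_strat \<rho>'" unfolding act_strat_def \<rho>'_def using as rd act_strat_def by auto
  have split: "payoff \<mu> u \<sigma> q = (\<Sum>x\<in>UNIV. q m x * G x) +
     (\<Sum>m'\<in>UNIV-{m}. \<Sum>x\<in>UNIV. q m' x * (\<Sum>w\<in>UNIV. \<mu> w * \<sigma> w m' * u x w))" for q
    unfolding payoff_G G_def by (simp add: sum.remove[of UNIV m])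
  have "(\<Sum>x\<in>UNIV. r x * G x) = (\<Sum>x\<in>UNIV. \<rho> m x * G x) + \<rho> m a * G a' - \<rho> m a * G a"
  proof -
    have "\<And>x. r x * G x = \<rho> m x * G x + (if x = a' then \<rho> m a else 0) * G x - (if x = a then \<rho> m a else 0) * G x"
      unfolding r_def by (simp add: algebra_simps)
    then show ?thesis by (simp add: sum.distrib sum_subtractf sum_delta_mult)
  qed
  moreover have "payoff \<mu> u \<sigma> \<rho>' \<le> payoff \<mu> u \<sigma> \<rho>" using br as' R_BR_def by blast
  ultimately have "\<rho> m a * G a' \<le> \<rho> m a * G a"
    using split[of \<rho>'] split[of \<rho>] unfolding \<rho>'_def by simp
  then show ?thesis using pos unfolding G_def by simp
qed

theorem lemma12:
  fixes \<mu>0 :: "'w::finite \<Rightarrow> real"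
    and uS uR :: "'a::finite \<Rightarrow> 'w \<Rightarrow> real"
  assumes prior: "\<forall>w. \<mu>0 w > 0" "sum \<mu>0 UNIV = 1"
    and msgs: "CARD('m) > CARD('w)" "CARD('m) > CARD('a)"
    and env: "environment uS uR"
    and transp: "transparent uS"
    and nodup: "transparent_no_dup uS"
    and noval: "commitment_no_value \<mu>0 uS uR TYPE('m::finite)"
  shows "\<exists>(\<sigma>::'w \<Rightarrow> 'm \<Rightarrow> real) \<rho>. simple_babbling_eq \<mu>0 uS uR \<sigma> \<rho> \<and>
           payoff \<mu>0 uS \<sigma> \<rho> = persuasion_payoff \<mu>0 uS uR TYPE('m::finite)"
proof -
  obtain v where T: "\<forall>a w. uS a w = v a" and nd: "\<forall>a a'. a \<noteq> a' \<longrightarrow> v a \<noteq> v a'"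
    using nodup unfolding transparent_no_dup_def by blast
  have mu0: "\<forall>w. 0 \<le> \<mu>0 w" using prior(1) by (simp add: less_imp_le)
  have u1: "\<forall>a w. uS a w \<le> 1" using env unfolding environment_def by blast
  define R where "R a = (\<Sum>w\<in>UNIV. \<mu>0 w * uR a w)" for a
  obtain a1 where a1: "\<forall>a. R a \<le> R a1"
  proof -
    have "Max (range R) \<in> range R" by (rule Max_in) auto
    then obtain a1 where "R a1 = Max (range R)" by (metis rangeE)
    moreover have "R a \<le> Max (range R)" for a by (rule Max_ge) auto
    ultimately have "\<forall>a. R a \<le> R a1" by simp
    then show ?thesis using that by blast
  qed
  define PS where "PS = {payoff \<mu>0 uS \<sigma> \<rho> | (\<sigma>::'w \<Rightarrow> 'm \<Rightarrow> real) \<rho>. R_BR \<mu>0 uR \<sigma> \<rho>}"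
  define CS where "CS = {payoff \<mu>0 uS \<sigma> \<rho> | (\<sigma>::'w \<Rightarrow> 'm \<Rightarrow> real) \<rho>. cheap_talk_eq \<mu>0 uS uR \<sigma> \<rho>}"
  define P where "P = persuasion_payoff \<mu>0 uS uR TYPE('m)"
  have P_PS: "P = Sup PS" unfolding P_def PS_def persuasion_payoff_def ..
  have P_CS: "P = Sup CS" using noval unfolding P_def CS_def commitment_no_value_def cheap_talk_payoff_def by simp
  have bddPS: "bdd_above PS"
    unfolding PS_def bdd_above_def
    using payoff_le[OF _ _ mu0 u1] prior(2) unfolding R_BR_def by (intro exI[of _ 1]) auto
  have CSne: "CS \<noteq> {}"
  proof -
    have "simple_babbling_eq \<mu>0 uS uR (\<lambda>w m. if m = (undefined::'m) then 1 else 0) (\<lambda>m a. if a = a1 then 1 else 0)"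
      using babble[OF mu0 T, where aa=a1 and mm="undefined::'m" and uR=uR] a1 unfolding R_def by blast
    then show ?thesis unfolding CS_def simple_babbling_eq_def by blast
  qed
  define t where "t = Max (insert (P - 1) {x \<in> range v. x < P})"
  have tfin: "finite (insert (P - 1) {x \<in> range v. x < P})" by simp
  have tP: "t < P"
    using Max_in[OF tfin] unfolding t_def by auto
  have tv: "\<forall>a. v a < P \<longrightarrow> v a \<le> t"
    using Max_ge[OF tfin] unfolding t_def by auto
  obtain \<sigma> :: "'w \<Rightarrow> 'm \<Rightarrow> real" and \<rho> where eq: "cheap_talk_eq \<mu>0 uS uR \<sigma> \<rho>" and Vt: "t < payoff \<mu>0 uS \<sigma> \<rho>"
    using less_cSupD[OF CSne, of t] tP P_CS unfolding CS_def by auto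
  have sbr: "S_BR \<mu>0 uS \<sigma> \<rho>" and rbr: "R_BR \<mu>0 uR \<sigma> \<rho>" using eq unfolding cheap_talk_eq_def by auto
  have ms: "msg_strat \<sigma>" and as: "act_strat \<rho>" using sbr unfolding S_BR_def by auto
  define V where "V = payoff \<mu>0 uS \<sigma> \<rho>"
  define q where "q m = (\<Sum>w\<in>UNIV. \<mu>0 w * \<sigma> w m)" for m
  define e where "e m = (\<Sum>a\<in>UNIV. \<rho> m a * v a)" for m
  have q_nn: "0 \<le> q m" for m
    unfolding q_def using mu0 sig_nn[OF ms] by (auto intro!: sum_nonneg)
  have qsum: "sum q UNIV = 1"
  proof -
    have "sum q UNIV = (\<Sum>w\<in>UNIV. \<Sum>m\<in>UNIV. \<mu>0 w * \<sigma> w m)"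
      unfolding q_def by (rule sum.swap)
    also have "\<dots> = (\<Sum>w\<in>UNIV. \<mu>0 w)"
      by (simp add: sum_distrib_left[symmetric] sig_sum[OF ms])
    finally show ?thesis using prior(2) by simp
  qed
  have payT: "payoff \<mu>0 uS \<sigma>' \<rho>' = (\<Sum>m\<in>UNIV. (\<Sum>w\<in>UNIV. \<mu>0 w * \<sigma>' w m) * (\<Sum>a\<in>UNIV. \<rho>' m a * v a))" for \<sigma>' \<rho>'
  proof -
    have "payoff \<mu>0 uS \<sigma>' \<rho>' = (\<Sum>w\<in>UNIV. \<Sum>m\<in>UNIV. \<mu>0 w * \<sigma>' w m * (\<Sum>a\<in>UNIV. \<rho>' m a * v a))"
      unfolding payoff_T[OF T] by (simp add: sum_distrib_left mult_ac)
    also have "\<dots> = (\<Sum>m\<in>UNIV. \<Sum>w\<in>UNIV. \<mu>0 w * \<sigma>' w m * (\<Sum>a\<in>UNIV. \<rho>' m a * v a))"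
      by (rule sum.swap)
    also have "\<dots> = (\<Sum>m\<in>UNIV. (\<Sum>w\<in>UNIV. \<mu>0 w * \<sigma>' w m) * (\<Sum>a\<in>UNIV. \<rho>' m a * v a))"
      by (simp add: sum_distrib_right)
    finally show ?thesis .
  qed
  have VE: "V = (\<Sum>m\<in>UNIV. q m * e m)" unfolding V_def payT q_def e_def ..
  define E where "E = Max (range e)"
  have eE: "e m \<le> E" for m unfolding E_def by simp
  obtain mE where mE: "e mE = E"
  proof -
    have "E \<in> range e" unfolding E_def by (rule Max_in) auto
    then show ?thesis using that by (metis rangeE)
  qed
  have "payoff \<mu>0 uS (\<lambda>w m. if m = mE then 1 else 0) \<rho> = E"
  proof -
    have "payoff \<mu>0 uS (\<lambda>w m. if m = mE then 1 else 0) \<rho> = (\<Sum>w\<in>UNIV. \<mu>0 w * E)"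
      unfolding payoff_T[OF T] using mE unfolding e_def by (simp add: sum_delta_mult)
    also have "\<dots> = E" using prior(2) by (simp add: sum_distrib_right[symmetric])
    finally show ?thesis .
  qed
  moreover have "msg_strat (\<lambda>(w::'w) (m::'m). if m = mE then 1 else 0)"
    unfolding msg_strat_def using dist_d by auto
  ultimately have EV: "E \<le> V" using sbr unfolding S_BR_def V_def by metis
  have used: "V \<le> e m" if qm: "0 < q m" for m
  proof -
    have "q m * (E - e m) \<le> (\<Sum>m'\<in>UNIV. q m' * (E - e m'))"
      by (rule member_le_sum) (auto intro!: mult_nonneg_nonneg q_nn simp: eE)
    also have "\<dots> = E * sum q UNIV - V"
      unfolding VE by (simp add: algebra_simps sum_subtractf sum_distrib_left)
    finally have "q m * (E - e m) \<le> 0" using qsum EV by simp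
    then have "E - e m \<le> 0" using qm by (simp add: mult_le_0_iff)
    moreover have "V \<le> E"
    proof -
      have "V \<le> (\<Sum>m\<in>UNIV. q m * E)" unfolding VE
        by (intro sum_mono mult_left_mono eE q_nn)
      also have "\<dots> = E" using qsum by (simp add: sum_distrib_right[symmetric])
      finally show ?thesis .
    qed
    ultimately show ?thesis by simp
  qed
  have "\<forall>m. \<exists>a. 0 < \<rho> m a \<and> (\<forall>a'. 0 < \<rho> m a' \<longrightarrow> v a' \<le> v a)"
  proof
    fix m
    define S where "S = {a. 0 < \<rho> m a}"
    have Sne: "S \<noteq> {}"
    proof
      assume "S = {}"
      then have "\<forall>a. \<rho> m a = 0" using rho_nn[OF as, of m] unfolding S_def by (auto simp: order_le_less)
      then show False using rho_sum[OF as, of m] by simp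
    qed
    have "Max (v ` S) \<in> v ` S" by (rule Max_in) (auto simp: Sne)
    then obtain a where aS: "a \<in> S" "v a = Max (v ` S)" by auto
    have "\<forall>a'. 0 < \<rho> m a' \<longrightarrow> v a' \<le> v a" using aS(2) unfolding S_def by simp
    then show "\<exists>a. 0 < \<rho> m a \<and> (\<forall>a'. 0 < \<rho> m a' \<longrightarrow> v a' \<le> v a)" using aS(1) unfolding S_def by blast
  qed
  then obtain ap where ap: "\<And>m. 0 < \<rho> m (ap m)" "\<And>m a'. 0 < \<rho> m a' \<Longrightarrow> v a' \<le> v (ap m)"
    by metis
  have ev: "e m \<le> v (ap m)" for m
  proof -
    have "e m \<le> (\<Sum>a\<in>UNIV. \<rho> m a * v (ap m))"
      unfolding e_def
    proof (rule sum_mono)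
      fix a
      show "\<rho> m a * v a \<le> \<rho> m a * v (ap m)"
      proof (cases "0 < \<rho> m a")
        case True then show ?thesis using ap(2) by (simp add: mult_left_mono)
      next
        case False then have "\<rho> m a = 0" using rho_nn[OF as, of m a] by simp
        then show ?thesis by simp
      qed
    qed
    also have "\<dots> = v (ap m)" using rho_sum[OF as, of m] by (simp add: sum_distrib_right[symmetric])
    finally show ?thesis .
  qed
  have apP: "P \<le> v (ap m)" if "0 < q m" for m
  proof (rule ccontr)
    assume "\<not> P \<le> v (ap m)"
    then have "v (ap m) \<le> t" using tv by simp
    moreover have "V \<le> v (ap m)" using used[OF that] ev[of m] by simp
    ultimately show False using Vt unfolding V_def by simp
  qed
  have unused: "\<sigma> w m = 0" if "q m = 0" for w m
  proof -
    have "\<forall>w\<in>UNIV. \<mu>0 w * \<sigma> w m = 0"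
      using that unfolding q_def
      by (subst sum_nonneg_eq_0_iff[symmetric]) (auto intro!: mult_nonneg_nonneg simp: mu0 sig_nn[OF ms])
    then show ?thesis using prior(1) by (metis UNIV_I mult_eq_0_iff order_less_irrefl)
  qed
  define G where "G m a = (\<Sum>w\<in>UNIV. \<mu>0 w * \<sigma> w m * uR a w)" for m a
  have Gle: "G m a \<le> G m (ap m)" for m a
    unfolding G_def by (rule BR_supp[OF rbr ap(1)])
  define \<rho>2 where "\<rho>2 m a = (if a = ap m then 1 else (0::real))" for m a
  have as2: "act_strat \<rho>2" unfolding act_strat_def \<rho>2_def using dist_d by auto
  have rbr2: "R_BR \<mu>0 uR \<sigma> \<rho>2"
    unfolding R_BR_def
  proof (intro conjI ms as2 allI impI)
    fix \<rho>' :: "'m \<Rightarrow> 'a \<Rightarrow> real" assume a: "act_strat \<rho>'"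
    have "payoff \<mu>0 uR \<sigma> \<rho>' = (\<Sum>m\<in>UNIV. \<Sum>a\<in>UNIV. \<rho>' m a * G m a)"
      unfolding payoff_G G_def ..
    also have "\<dots> \<le> (\<Sum>m\<in>UNIV. \<Sum>a\<in>UNIV. \<rho>' m a * G m (ap m))"
      by (intro sum_mono mult_left_mono Gle rho_nn[OF a])
    also have "\<dots> = (\<Sum>m\<in>UNIV. G m (ap m))"
      using rho_sum[OF a] by (simp add: sum_distrib_right[symmetric])
    also have "\<dots> = payoff \<mu>0 uR \<sigma> \<rho>2"
      unfolding payoff_G G_def \<rho>2_def by (simp add: sum_delta_mult)
    finally show "payoff \<mu>0 uR \<sigma> \<rho>' \<le> payoff \<mu>0 uR \<sigma> \<rho>2" .
  qed
  have W: "payoff \<mu>0 uS \<sigma> \<rho>2 = (\<Sum>m\<in>UNIV. q m * v (ap m))"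
    unfolding payT q_def \<rho>2_def by (simp add: sum_delta_mult)
  have "payoff \<mu>0 uS \<sigma> \<rho>2 \<in> PS" unfolding PS_def using rbr2 by blast
  then have WP: "(\<Sum>m\<in>UNIV. q m * v (ap m)) \<le> P"
    using cSup_upper[OF _ bddPS] P_PS W by simp
  have terms_nn: "0 \<le> q m * (v (ap m) - P)" for m
  proof (cases "q m = 0")
    case False then have "0 < q m" using q_nn[of m] by simp
    then show ?thesis using apP by simp
  qed simp
  have "(\<Sum>m\<in>UNIV. q m * (v (ap m) - P)) = (\<Sum>m\<in>UNIV. q m * v (ap m)) - P * sum q UNIV"
    by (simp add: algebra_simps sum_subtractf sum_distrib_left)
  then have "(\<Sum>m\<in>UNIV. q m * (v (ap m) - P)) = 0"
    using WP qsum sum_nonneg[of UNIV "\<lambda>m. q m * (v (ap m) - P)"] terms_nn by simp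
  then have zero: "\<forall>m\<in>UNIV. q m * (v (ap m) - P) = 0"
    using sum_nonneg_eq_0_iff[of UNIV "\<lambda>m. q m * (v (ap m) - P)"] terms_nn by simp
  have vP: "v (ap m) = P" if "0 < q m" for m using zero that by (metis UNIV_I less_irrefl mult_eq_0_iff right_minus_eq)
  obtain m0 where m0: "0 < q m0"
  proof (rule ccontr)
    assume "\<not> thesis"
    then have "\<forall>m. q m \<le> 0" using that by (meson not_le)
    then have "sum q UNIV \<le> 0" by (simp add: sum_nonpos)
    then show False using qsum by simp
  qed
  define a0 where "a0 = ap m0"
  have apa0: "ap m = a0" if "0 < q m" for m
    using vP[OF that] vP[OF m0] nd unfolding a0_def by metis
  have Rsum: "R a = (\<Sum>m\<in>UNIV. G m a)" for a
  proof -
    have "(\<Sum>m\<in>UNIV. G m a) = (\<Sum>w\<in>UNIV. \<Sum>m\<in>UNIV. \<mu>0 w * \<sigma> w m * uR a w)"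
      unfolding G_def by (rule sum.swap)
    also have "\<dots> = (\<Sum>w\<in>UNIV. \<mu>0 w * uR a w * (\<Sum>m\<in>UNIV. \<sigma> w m))"
      by (simp add: sum_distrib_left mult_ac)
    also have "\<dots> = R a" unfolding R_def by (simp add: sig_sum[OF ms])
    finally show ?thesis by simp
  qed
  have best: "\<forall>a. (\<Sum>w\<in>UNIV. \<mu>0 w * uR a w) \<le> (\<Sum>w\<in>UNIV. \<mu>0 w * uR a0 w)"
  proof
    fix a
    have "(\<Sum>m\<in>UNIV. G m a) \<le> (\<Sum>m\<in>UNIV. G m a0)"
    proof (rule sum_mono)
      fix m
      show "G m a \<le> G m a0"
      proof (cases "q m = 0")
        case True then show ?thesis unfolding G_def using unused by simp
      next
        case False then have "0 < q m" using q_nn[of m] by simp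
        then show ?thesis using Gle[of m a] apa0 by simp
      qed
    qed
    then show "(\<Sum>w\<in>UNIV. \<mu>0 w * uR a w) \<le> (\<Sum>w\<in>UNIV. \<mu>0 w * uR a0 w)"
      using Rsum unfolding R_def by simp
  qed
  have "v a0 = P" using vP[OF m0] unfolding a0_def .
  then show ?thesis
    using babble[OF mu0 T best, where mm=m0] prior(2) unfolding P_def by auto
qed

end
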